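(* For every $f\in L^{\infty}(\mathbb{R}_+)$, $\overline{E}_{\infty}(f)=\overline{M}_1(f)$. In particular, the summability methods $(E_\infty,\mathcal{D}(E_\infty))$ and $(M_1,\mathcal{D}(M_1))$ coincide.
   Context: $L^{\infty}(\mathbb{R}_+)$ is the space of real-valued essentially bounded measurable functions on $[0,\infty)$. Let $(Sf)(x)=e^{-x}\int_0^xf(t)e^t\,dt$, $\overline{E}_k(f)=\limsup_{x\to\infty}(S^kf)(x)$ for $k\ge1$ (nonincreasing in $k$), and $\overline{E}_\infty(f)=\lim_{k\to\infty}\overline{E}_k(f)$. Let $\overline{M}_1(f)=\lim_{\theta\to\infty}\limsup_{x\to\infty}\frac1\theta\int_x^{x+\theta}f(t)\,dt$. For such a sublinear functional $\overline{F}$, the summability method $(F,\mathcal{D}(F))$ has domain $\{f:\overline{F}(f)=-\overline{F}(-f)\}$ and value $F(f)=\overline{F}(f)$ there. *)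

theory Defs
  imports "HOL-Analysis.Analysis"
begin

text \<open>Real-valued essentially bounded (Lebesgue) measurable functions on [0,\<infinity>).
  Functions are represented as real \<Rightarrow> real; values at negative arguments are irrelevant.\<close>
definition Linf :: "(real \<Rightarrow> real) set" where
  "Linf = {f. set_borel_measurable lebesgue {0..} f \<and>
              (\<exists>C. AE x in lebesgue. x \<in> {0..} \<longrightarrow> \<bar>f x\<bar> \<le> C)}"

definition Sop :: "(real \<Rightarrow> real) \<Rightarrow> real \<Rightarrow> real" where
  "Sop f x = exp (- x) * (LINT t:{0..x}|lebesgue. f t * exp t)"

definition Ebar :: "nat \<Rightarrow> (real \<Rightarrow> real) \<Rightarrow> ereal" where
  "Ebar k f = Limsup at_top (\<lambda>x. ereal ((Sop ^^ k) f x))"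

definition Ebar_inf :: "(real \<Rightarrow> real) \<Rightarrow> ereal" where
  "Ebar_inf f = lim (\<lambda>k. Ebar (Suc k) f)"

definition Mbar1 :: "(real \<Rightarrow> real) \<Rightarrow> ereal" where
  "Mbar1 f = Lim at_top (\<lambda>\<theta>. Limsup at_top
       (\<lambda>x. ereal ((1 / \<theta>) * (LINT t:{x..x+\<theta>}|lebesgue. f t))))"

text \<open>Domain of the summability method induced by a sublinear functional;
  its value on the domain is the functional itself.\<close>
definition sm_domain :: "((real \<Rightarrow> real) \<Rightarrow> ereal) \<Rightarrow> (real \<Rightarrow> real) set" where
  "sm_domain F = {f \<in> Linf. F f = - F (\<lambda>x. - f x)}"

end

theory Submission
  imports Defs
begin


lemma fubini_rect:
  fixes F :: "real \<Rightarrow> real \<Rightarrow> real"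
  assumes [measurable]: "case_prod F \<in> borel_measurable (lborel \<Otimes>\<^sub>M lborel)"
    and bnd: "\<And>s t. s \<in> {a..b} \<Longrightarrow> t \<in> {c..d} \<Longrightarrow> \<bar>F s t\<bar> \<le> M"
  shows "(LINT s:{a..b}|lborel. LINT t:{c..d}|lborel. F s t) = (LINT t:{c..d}|lborel. LINT s:{a..b}|lborel. F s t)"
proof -
  let ?G = "\<lambda>s t. indicator {a..b} s * (indicator {c..d} t * F s t)"
  have int: "integrable (lborel \<Otimes>\<^sub>M lborel) (case_prod ?G)"
  proof (rule integrableI_bounded_set[where A="{a..b} \<times> {c..d}" and B=M])
    show "emeasure (lborel \<Otimes>\<^sub>M lborel) ({a..b} \<times> {c..d}) < \<infinity>"
    proof -
      have "emeasure lborel {a..b} < \<infinity>" "emeasure lborel {c..d} < \<infinity>"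
        by (simp_all add: emeasure_lborel_Icc_eq)
      then show ?thesis
        by (subst lborel.emeasure_pair_measure_Times) (auto simp: ennreal_mult_less_top)
    qed
    show "AE x in lborel \<Otimes>\<^sub>M lborel. x \<in> {a..b} \<times> {c..d} \<longrightarrow> norm (case_prod ?G x) \<le> M"
      using bnd by (auto simp: indicator_def)
    show "AE x in lborel \<Otimes>\<^sub>M lborel. x \<notin> {a..b} \<times> {c..d} \<longrightarrow> case_prod ?G x = 0"
      by (auto simp: indicator_def)
  qed auto
  have "(LINT s:{a..b}|lborel. LINT t:{c..d}|lborel. F s t) = (\<integral>s. \<integral>t. ?G s t \<partial>lborel \<partial>lborel)"
    unfolding set_lebesgue_integral_def by simp
  also have "\<dots> = (\<integral>t. \<integral>s. ?G s t \<partial>lborel \<partial>lborel)"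
    using lborel_pair.Fubini_integral[OF int] by simp
  also have "\<dots> = (LINT t:{c..d}|lborel. LINT s:{a..b}|lborel. F s t)"
    unfolding set_lebesgue_integral_def
    by (intro Bochner_Integration.integral_cong refl) (auto simp: indicator_def)
  finally show ?thesis .
qed

lemma si_int:
  fixes h :: "real \<Rightarrow> real"
  assumes "h \<in> borel_measurable borel" "\<And>t. t \<in> {a..b} \<Longrightarrow> \<bar>h t\<bar> \<le> M"
  shows "set_integrable lborel {a..b} h"
  unfolding set_integrable_def
  by (rule integrableI_bounded_set_indicator[where B=M]) (use assms in \<open>auto simp: emeasure_lborel_Icc_eq\<close>)

lemma si_const:
  assumes "a \<le> b"
  shows "(LINT t:{a..b}|lborel. (c::real)) = c * (b - a)"
  using assms by (subst set_integral_const) (auto simp: emeasure_lborel_Icc_eq)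

lemma si_mono:
  fixes f g :: "real \<Rightarrow> real"
  assumes "f \<in> borel_measurable borel" "g \<in> borel_measurable borel"
    "\<And>t. t \<in> {a..b} \<Longrightarrow> \<bar>f t\<bar> \<le> M" "\<And>t. t \<in> {a..b} \<Longrightarrow> \<bar>g t\<bar> \<le> M"
    "\<And>t. t \<in> {a..b} \<Longrightarrow> f t \<le> g t"
  shows "(LINT t:{a..b}|lborel. f t) \<le> (LINT t:{a..b}|lborel. g t)"
proof (rule set_integral_mono)
  show "set_integrable lborel {a..b} f" by (rule si_int[OF assms(1) assms(3)])
  show "set_integrable lborel {a..b} g" by (rule si_int[OF assms(2) assms(4)])
qed (use assms in auto)

lemma si_bound:
  fixes h :: "real \<Rightarrow> real"
  assumes "h \<in> borel_measurable borel" "\<And>t. t \<in> {a..b} \<Longrightarrow> \<bar>h t\<bar> \<le> M" "a \<le> b"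
  shows "\<bar>LINT t:{a..b}|lborel. h t\<bar> \<le> M * (b - a)"
proof -
  have M: "0 \<le> M" using assms(2)[of a] assms(3) by auto
  have hb: "-M \<le> h t \<and> h t \<le> M" if "t \<in> {a..b}" for t
    using assms(2)[OF that] by linarith
  have "(LINT t:{a..b}|lborel. h t) \<le> (LINT t:{a..b}|lborel. M)"
    by (rule si_mono[where M="max M \<bar>M\<bar>"]) (use assms M hb in \<open>auto simp: abs_le_iff\<close>)
  moreover have "(LINT t:{a..b}|lborel. -M) \<le> (LINT t:{a..b}|lborel. h t)"
    by (rule si_mono[where M="max M \<bar>M\<bar>"]) (use assms M hb in \<open>auto simp: abs_le_iff\<close>)
  ultimately show ?thesis using assms(3) by (simp add: si_const abs_le_iff)
qed

lemma si_ftc: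
  fixes f F :: "real \<Rightarrow> real"
  assumes "a \<le> b" "\<And>x. a \<le> x \<Longrightarrow> x \<le> b \<Longrightarrow> (F has_real_derivative f x) (at x)"
    "continuous_on {a..b} f"
  shows "(LINT x:{a..b}|lborel. f x) = F b - F a"
  unfolding set_lebesgue_integral_def
  by (rule integral_FTC_atLeastAtMost[OF assms(1) _ assms(3)])
     (use assms(2) in \<open>auto simp: has_real_derivative_iff_has_vector_derivative intro: has_vector_derivative_at_within\<close>)

lemma si_split:
  fixes h :: "real \<Rightarrow> real"
  assumes "h \<in> borel_measurable borel" "\<And>t. t \<in> {a..c} \<Longrightarrow> \<bar>h t\<bar> \<le> M" "a \<le> b" "b \<le> c"
  shows "(LINT t:{a..c}|lborel. h t) = (LINT t:{a..b}|lborel. h t) + (LINT t:{b..c}|lborel. h t)"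
proof -
  have int: "set_integrable lborel {a..c} h" by (rule si_int) (use assms in auto)
  have "(LBINT x=ereal a..ereal b. h x) + (LBINT x=ereal b..ereal c. h x) = (LBINT x=ereal a..ereal c. h x)"
    by (rule interval_integral_sum) (use assms int in \<open>auto simp: interval_lebesgue_integrable_def min_def max_def
        intro: set_integrable_subset[OF int]\<close>)
  then show ?thesis using assms by (simp add: interval_integral_Icc)
qed


lemma si_cong:
  fixes f g :: "'a \<Rightarrow> real"
  shows "(\<And>x. x \<in> A \<Longrightarrow> f x = g x) \<Longrightarrow> (LINT x:A|M. f x) = (LINT x:A|M. g x)"
  unfolding set_lebesgue_integral_def
  by (rule Bochner_Integration.integral_cong[OF refl]) (auto simp: indicator_def)

lemma tri_swap:
  fixes h :: "real \<Rightarrow> real" and k :: "real \<Rightarrow> real \<Rightarrow> real"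
  assumes hm[measurable]: "h \<in> borel_measurable borel" and hb: "\<And>t. \<bar>h t\<bar> \<le> C"
    and km[measurable]: "case_prod k \<in> borel_measurable (lborel \<Otimes>\<^sub>M lborel)"
    and kb: "\<And>s w. 0 \<le> w \<Longrightarrow> w \<le> s \<Longrightarrow> s \<le> b \<Longrightarrow> \<bar>k s w\<bar> \<le> K"
    and ab: "0 \<le> a" "a \<le> b"
  shows "(LINT s:{a..b}|lborel. (LINT w:{0..s}|lborel. h w * k s w)) =
         (LINT w:{0..b}|lborel. h w * (LINT s:{max a w..b}|lborel. k s w))"
proof -
  define F where "F s w = (if w \<le> s then h w * k s w else 0)" for s w
  have C0: "0 \<le> C" using hb[of 0] by auto
  have K0: "0 \<le> K" using kb[of 0 0] ab by auto
  have "(LINT s:{a..b}|lborel. (LINT w:{0..s}|lborel. h w * k s w)) =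
        (LINT s:{a..b}|lborel. (LINT w:{0..b}|lborel. F s w))"
  proof (rule si_cong)
    fix s assume s: "s \<in> {a..b}"
    show "(LINT w:{0..s}|lborel. h w * k s w) = (LINT w:{0..b}|lborel. F s w)"
      unfolding set_lebesgue_integral_def
      by (rule Bochner_Integration.integral_cong[OF refl]) (use s in \<open>auto simp: F_def indicator_def\<close>)
  qed
  also have "\<dots> = (LINT w:{0..b}|lborel. (LINT s:{a..b}|lborel. F s w))"
  proof (rule fubini_rect[where M="C*K"])
    have hm2: "h \<in> borel_measurable lborel" using hm by (simp add: measurable_lborel1)
    show "case_prod F \<in> borel_measurable (lborel \<Otimes>\<^sub>M lborel)"
      unfolding F_def using hm2 by measurable
    fix s w assume "s \<in> {a..b}" "w \<in> {0..b}"
    then show "\<bar>F s w\<bar> \<le> C * K"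
      using C0 K0 hb[of w] kb[of w s] by (auto simp: F_def abs_mult intro: mult_mono)
  qed
  also have "\<dots> = (LINT w:{0..b}|lborel. h w * (LINT s:{max a w..b}|lborel. k s w))"
  proof (rule si_cong)
    fix w assume w: "w \<in> {0..b}"
    have "(LINT s:{a..b}|lborel. F s w) = (\<integral>s. h w * (indicator {max a w..b} s * k s w) \<partial>lborel)"
      unfolding set_lebesgue_integral_def
      by (rule Bochner_Integration.integral_cong[OF refl]) (auto simp: F_def indicator_def)
    also have "\<dots> = h w * (LINT s:{max a w..b}|lborel. k s w)"
      unfolding set_lebesgue_integral_def by simp
    finally show "(LINT s:{a..b}|lborel. F s w) = h w * (LINT s:{max a w..b}|lborel. k s w)" .
  qed
  finally show ?thesis .
qed



definition S :: "(real \<Rightarrow> real) \<Rightarrow> real \<Rightarrow> real" where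
  "S h x = exp (- x) * (LINT t:{0..x}|lborel. h t * exp t)"

definition Bav :: "real \<Rightarrow> (real \<Rightarrow> real) \<Rightarrow> real \<Rightarrow> real" where
  "Bav \<theta> h x = (1/\<theta>) * (LINT t:{x..x+\<theta>}|lborel. h t)"

lemma S_meas[measurable]:
  assumes [measurable]: "h \<in> borel_measurable borel"
  shows "S h \<in> borel_measurable borel"
proof -
  have "(\<lambda>x. LINT t:{0..x}|lborel. h t * exp t) \<in> borel_measurable borel"
    unfolding set_lebesgue_integral_def indicator_def atLeastAtMost_iff
    using assms[unfolded measurable_lborel1[symmetric]] by measurable
  then show ?thesis unfolding S_def by measurable
qed

lemma Bav_meas[measurable]:
  assumes [measurable]: "h \<in> borel_measurable borel"
  shows "Bav \<theta> h \<in> borel_measurable borel"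
proof -
  have "(\<lambda>x. LINT t:{x..x+\<theta>}|lborel. h t) \<in> borel_measurable borel"
    unfolding set_lebesgue_integral_def indicator_def atLeastAtMost_iff
    using assms[unfolded measurable_lborel1[symmetric]] by measurable
  then show ?thesis unfolding Bav_def by measurable
qed

lemma S_alt: "S h s = (LINT w:{0..s}|lborel. h w * exp (w - s))"
proof -
  have "S h s = (LINT w:{0..s}|lborel. exp (- s) * (h w * exp w))"
    unfolding S_def by simp
  also have "\<dots> = (LINT w:{0..s}|lborel. h w * exp (w - s))"
    by (rule si_cong) (simp add: exp_diff exp_minus field_simps)
  finally show ?thesis .
qed

lemma S_bound:
  assumes hm[measurable]: "h \<in> borel_measurable borel" and hb: "\<And>t. \<bar>h t\<bar> \<le> C"
  shows "\<bar>S h x\<bar> \<le> C"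
proof (cases "x < 0")
  case True
  then show ?thesis using hb[of 0] by (simp add: S_def set_lebesgue_integral_def)
next
  case False
  have C0: "0 \<le> C" using hb[of 0] by auto
  have hu: "h t \<le> C" "- C \<le> h t" for t using hb[of t] by linarith+
  have I: "(LINT t:{0..x}|lborel. C * exp t) = C * exp x - C * exp 0"
    by (rule si_ftc) (use False in \<open>auto intro!: derivative_eq_intros continuous_intros\<close>)
  have b1: "\<bar>h t * exp t\<bar> \<le> C * exp x" if "t \<in> {0..x}" for t
    using that hb[of t] C0 by (auto simp: abs_mult intro!: mult_mono)
  have b2: "\<bar>C * exp t\<bar> \<le> C * exp x" if "t \<in> {0..x}" for t
    using that C0 by (auto simp: abs_mult intro!: mult_mono)
  have b3: "\<bar>- (C * exp t)\<bar> \<le> C * exp x" if "t \<in> {0..x}" for t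
    using b2[OF that] by simp
  have u: "(LINT t:{0..x}|lborel. h t * exp t) \<le> (LINT t:{0..x}|lborel. C * exp t)"
    by (rule si_mono[OF _ _ b1 b2]) (use hu in \<open>auto intro!: mult_right_mono\<close>)
  have l: "(LINT t:{0..x}|lborel. - (C * exp t)) \<le> (LINT t:{0..x}|lborel. h t * exp t)"
  proof (rule si_mono[OF _ _ b3 b1])
    fix t show "- (C * exp t) \<le> h t * exp t"
      using mult_right_mono[OF hu(2)[of t], of "exp t"] by simp
  qed auto
  have l': "(LINT t:{0..x}|lborel. - (C * exp t)) = - (LINT t:{0..x}|lborel. C * exp t)"
    by (rule set_integral_uminus) (rule si_int[OF _ b2], simp)
  have "\<bar>LINT t:{0..x}|lborel. h t * exp t\<bar> \<le> C * exp x - C"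
    using u l l' I by simp
  then have "exp (-x) * \<bar>LINT t:{0..x}|lborel. h t * exp t\<bar> \<le> exp (-x) * (C * exp x - C)"
    by (intro mult_left_mono) auto
  also have "\<dots> = C - C * exp (-x)" by (simp add: field_simps exp_minus)
  also have "\<dots> \<le> C" using C0 by simp
  finally show ?thesis by (simp add: S_def abs_mult)
qed

lemma hexp_bound:
  fixes y :: real
  assumes "\<bar>y\<bar> \<le> C" "w \<le> c"
  shows "\<bar>y * exp (w - c)\<bar> \<le> C"
proof -
  have "\<bar>y * exp (w - c)\<bar> = \<bar>y\<bar> * exp (w - c)" by (simp add: abs_mult)
  also have "\<dots> \<le> C * 1"
    using assms by (intro mult_mono) auto
  finally show ?thesis by simp
qed

lemma S_int:
  assumes hm[measurable]: "h \<in> borel_measurable borel" and hb: "\<And>t. \<bar>h t\<bar> \<le> C"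
    and ab: "0 \<le> a" "a \<le> b"
  shows "(LINT s:{a..b}|lborel. S h s) = S h a + (LINT s:{a..b}|lborel. h s) - S h b"
proof -
  have C0: "0 \<le> C" using hb[of 0] by auto
  have "(LINT s:{a..b}|lborel. S h s) = (LINT s:{a..b}|lborel. LINT w:{0..s}|lborel. h w * exp (w - s))"
    by (simp add: S_alt)
  also have "\<dots> = (LINT w:{0..b}|lborel. h w * (LINT s:{max a w..b}|lborel. exp (w - s)))"
    by (rule tri_swap[where C=C and K=1]) (use hb ab in \<open>auto\<close>)
  also have "\<dots> = (LINT w:{0..b}|lborel. h w * (exp (w - max a w) - exp (w - b)))"
  proof (rule si_cong)
    fix w assume w: "w \<in> {0..b}"
    have "(LINT s:{max a w..b}|lborel. exp (w - s)) = (- exp (w - b)) - (- exp (w - max a w))"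
      by (rule si_ftc) (use w ab in \<open>auto intro!: derivative_eq_intros continuous_intros\<close>)
    then show "h w * (LINT s:{max a w..b}|lborel. exp (w - s)) = h w * (exp (w - max a w) - exp (w - b))"
      by simp
  qed
  also have "\<dots> = (LINT w:{0..a}|lborel. h w * (exp (w - max a w) - exp (w - b))) +
                    (LINT w:{a..b}|lborel. h w * (exp (w - max a w) - exp (w - b)))"
  proof (rule si_split[where M="2*C"])
    fix t assume t: "t \<in> {0..b}"
    have "\<bar>h t * (exp (t - max a t) - exp (t - b))\<bar> \<le> \<bar>h t * exp (t - max a t)\<bar> + \<bar>h t * exp (t - b)\<bar>"
      by (simp add: right_diff_distrib)
    also have "\<dots> \<le> C + C"
      using hexp_bound[OF hb[of t], of t "max a t"] hexp_bound[OF hb[of t], of t b] t by auto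
    finally show "\<bar>h t * (exp (t - max a t) - exp (t - b))\<bar> \<le> 2 * C" by simp
  qed (use ab in auto)
  also have "(LINT w:{0..a}|lborel. h w * (exp (w - max a w) - exp (w - b))) =
             (LINT w:{0..a}|lborel. h w * exp (w - a) - h w * exp (w - b))"
    by (rule si_cong) (auto simp: max_def right_diff_distrib)
  also have "\<dots> = S h a - (LINT w:{0..a}|lborel. h w * exp (w - b))"
    unfolding S_alt
    by (rule set_integral_diff(2); rule si_int[where M=C]) (use hexp_bound[OF hb] ab in auto)
  also have "(LINT w:{a..b}|lborel. h w * (exp (w - max a w) - exp (w - b))) =
             (LINT w:{a..b}|lborel. h w - h w * exp (w - b))"
    by (rule si_cong) (auto simp: max_def right_diff_distrib)
  also have "\<dots> = (LINT w:{a..b}|lborel. h w) - (LINT w:{a..b}|lborel. h w * exp (w - b))"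
    by (rule set_integral_diff(2); rule si_int[where M=C]) (use hexp_bound[OF hb] hb ab in auto)
  also have "S h b = (LINT w:{0..a}|lborel. h w * exp (w - b)) + (LINT w:{a..b}|lborel. h w * exp (w - b))"
    unfolding S_alt
    by (rule si_split[where M=C]) (use hexp_bound[OF hb] ab in auto)
  ultimately show ?thesis by simp
qed

definition Kn :: "nat \<Rightarrow> real \<Rightarrow> real" where
  "Kn m r = r ^ (m - 1) * exp (- r) / fact (m - 1)"

lemma iter_props:
  assumes hm: "h \<in> borel_measurable borel" and hb: "\<And>t. \<bar>h t\<bar> \<le> C"
  shows "(S ^^ m) h \<in> borel_measurable borel \<and> (\<forall>x. \<bar>(S ^^ m) h x\<bar> \<le> C)"
proof (induction m)
  case 0 then show ?case using hm hb by simp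
next
  case (Suc m)
  then show ?case using S_bound[of "(S ^^ m) h" C] by auto
qed

lemma kernel_formula:
  assumes hm[measurable]: "h \<in> borel_measurable borel" and hb: "\<And>t. \<bar>h t\<bar> \<le> C"
    and x: "0 \<le> x"
  shows "(S ^^ Suc n) h x = (LINT w:{0..x}|lborel. h w * Kn (Suc n) (x - w))"
  using x
proof (induction n arbitrary: x)
  case 0
  show ?case by (simp add: S_alt Kn_def)
next
  case (Suc n)
  have "(S ^^ Suc (Suc n)) h x = (LINT s:{0..x}|lborel. (S ^^ Suc n) h s * exp (s - x))"
    by (simp add: S_alt)
  also have "\<dots> = (LINT s:{0..x}|lborel. LINT w:{0..s}|lborel. h w * (Kn (Suc n) (s - w) * exp (s - x)))"
  proof (rule si_cong)
    fix s assume s: "s \<in> {0..x}"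
    have "(S ^^ Suc n) h s * exp (s - x) = exp (s - x) * (LINT w:{0..s}|lborel. h w * Kn (Suc n) (s - w))"
      using Suc.IH[of s] s by simp
    also have "\<dots> = (LINT w:{0..s}|lborel. exp (s - x) * (h w * Kn (Suc n) (s - w)))"
      by simp
    also have "\<dots> = (LINT w:{0..s}|lborel. h w * (Kn (Suc n) (s - w) * exp (s - x)))"
      by (rule si_cong) simp
    finally show "(S ^^ Suc n) h s * exp (s - x) = \<dots>" .
  qed
  also have "\<dots> = (LINT w:{0..x}|lborel. h w * (LINT s:{max 0 w..x}|lborel. Kn (Suc n) (s - w) * exp (s - x)))"
  proof (rule tri_swap[where C=C and K="x ^ n / fact n"])
    show "(\<lambda>(s, w). Kn (Suc n) (s - w) * exp (s - x)) \<in> borel_measurable (lborel \<Otimes>\<^sub>M lborel)"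
      unfolding Kn_def by measurable
    fix s w assume sw: "0 \<le> w" "w \<le> s" "s \<le> x"
    have "\<bar>Kn (Suc n) (s - w) * exp (s - x)\<bar> = (s - w) ^ n * (exp (- (s - w)) * exp (s - x)) / fact n"
      using sw by (simp add: Kn_def abs_mult)
    also have "\<dots> \<le> x ^ n * (1 * 1) / fact n"
      using sw by (intro divide_right_mono mult_mono power_mono) auto
    finally show "\<bar>Kn (Suc n) (s - w) * exp (s - x)\<bar> \<le> x ^ n / fact n" by simp
  qed (use hb Suc.prems in auto)
  also have "\<dots> = (LINT w:{0..x}|lborel. h w * Kn (Suc (Suc n)) (x - w))"
  proof (rule si_cong)
    fix w assume w: "w \<in> {0..x}"
    define F where "F s = (s - w) ^ Suc n * (exp (w - x) / fact (Suc n))" for s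
    have "(LINT s:{w..x}|lborel. Kn (Suc n) (s - w) * exp (s - x)) = F x - F w"
    proof (rule si_ftc)
      fix s
      have d1: "((\<lambda>s. (s - w) ^ Suc n) has_real_derivative of_nat (Suc n) * (s - w) ^ n) (at s)"
        by (rule derivative_eq_intros refl | simp)+
      have d2: "(F has_real_derivative (of_nat (Suc n) * (s - w) ^ n) * (exp (w - x) / fact (Suc n))) (at s)"
        unfolding F_def by (rule DERIV_cmult_right[OF d1])
      have e: "exp (- (s - w)) * exp (s - x) = exp (w - x)" by (simp add: exp_add[symmetric])
      have "(of_nat (Suc n) * (s - w) ^ n) * (exp (w - x) / fact (Suc n)) = (s - w) ^ n * (exp (- (s - w)) * exp (s - x)) / fact n"
      proof -
        have f0: "(fact n::real) > 0" "real n + 1 > 0" by auto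
        have "(of_nat (Suc n) * (s - w) ^ n) * (exp (w - x) / fact (Suc n)) =
              ((real n + 1) * ((s - w) ^ n * exp (w - x))) / ((real n + 1) * fact n)"
          by (simp add: fact_Suc algebra_simps add_divide_distrib)
        also have "\<dots> = (s - w) ^ n * exp (w - x) / fact n"
          using f0 by (subst mult_divide_mult_cancel_left) auto
        finally show ?thesis unfolding e by simp
      qed
      also have "\<dots> = Kn (Suc n) (s - w) * exp (s - x)" by (simp add: Kn_def)
      finally show "(F has_real_derivative Kn (Suc n) (s - w) * exp (s - x)) (at s)" using d2 by simp
    qed (use w in \<open>auto simp: Kn_def intro!: continuous_intros\<close>)
    also have "F x - F w = Kn (Suc (Suc n)) (x - w)"
      by (simp add: F_def Kn_def exp_minus)
    finally show "h w * (LINT s:{max 0 w..x}|lborel. Kn (Suc n) (s - w) * exp (s - x)) = h w * Kn (Suc (Suc n)) (x - w)"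
      using w by simp
  qed
  finally show ?case .
qed



lemma Kn_deriv:
  "((\<lambda>w. Kn (Suc (Suc n)) (x - w)) has_real_derivative (Kn (Suc (Suc n)) (x - w) - Kn (Suc n) (x - w))) (at w)"
  unfolding Kn_def
  apply (rule derivative_eq_intros refl | simp)+
  apply (simp add: diff_divide_distrib)
  done

lemma Kn_Suc: "Kn (Suc (Suc n)) r = Kn (Suc n) r * (r / real (Suc n))"
  by (simp add: Kn_def fact_Suc field_simps)

lemma Kn_meas[measurable]: "(\<lambda>w. Kn m (x - w)) \<in> borel_measurable borel"
  unfolding Kn_def by measurable

lemma Kn_nonneg: "0 \<le> r \<Longrightarrow> 0 \<le> Kn m r"
  by (simp add: Kn_def)

lemma Kn_le_pow: "0 \<le> r \<Longrightarrow> r \<le> x \<Longrightarrow> Kn m r \<le> x ^ (m - 1) / fact (m - 1)"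
proof -
  assume r: "0 \<le> r" "r \<le> x"
  have "Kn m r = r ^ (m - 1) * exp (- r) / fact (m - 1)" by (simp add: Kn_def)
  also have "\<dots> \<le> x ^ (m - 1) * 1 / fact (m - 1)"
    using r by (intro divide_right_mono mult_mono power_mono) auto
  finally show ?thesis by simp
qed

lemma Kn_max:
  assumes r: "0 \<le> r"
  shows "Kn (Suc (Suc n)) r \<le> Kn (Suc (Suc n)) (Suc n)"
proof -
  define N where "N = real (Suc n)"
  have N: "N > 0" by (simp add: N_def)
  define t where "t = r / N"
  have t0: "0 \<le> t" using r N by (simp add: t_def)
  have rt: "r = N * t" using N by (simp add: t_def)
  have "t \<le> exp (t - 1)" using exp_ge_add_one_self[of "t - 1"] by simp
  then have "t * exp (- t) \<le> exp (t - 1) * exp (- t)" by (intro mult_right_mono) auto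
  also have "\<dots> = exp (- 1)" by (simp add: exp_add[symmetric])
  finally have te: "t * exp (- t) \<le> exp (- 1)" .
  have e1: "exp (- t) ^ Suc n = exp (real (Suc n) * (- t))" by (rule exp_of_nat_mult[symmetric])
  have e2: "real (Suc n) * (- t) = - r" using rt N_def by simp
  have "r ^ Suc n * exp (- r) = N ^ Suc n * (t * exp (- t)) ^ Suc n"
    unfolding power_mult_distrib e1 e2 by (simp add: rt power_mult_distrib)
  also have "\<dots> \<le> N ^ Suc n * (exp (- 1)) ^ Suc n"
    using te t0 N by (intro mult_left_mono power_mono) auto
  also have "\<dots> = N ^ Suc n * exp (- N)"
    by (simp add: N_def exp_of_nat_mult[symmetric] exp_diff exp_minus field_simps)
  finally have X: "r ^ Suc n * exp (- r) \<le> N ^ Suc n * exp (- N)" .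
  have "r ^ Suc n * exp (- r) / fact (Suc n) \<le> N ^ Suc n * exp (- N) / fact (Suc n)"
    by (rule divide_right_mono[OF X]) simp
  then show ?thesis unfolding Kn_def diff_Suc_1 N_def .
qed

lemma abs_int_signed:
  fixes h D :: "real \<Rightarrow> real"
  assumes hm: "h \<in> borel_measurable borel" and hb: "\<And>t. \<bar>h t\<bar> \<le> C"
    and Dm: "D \<in> borel_measurable borel" and Db: "\<And>t. t \<in> {a..b} \<Longrightarrow> \<bar>D t\<bar> \<le> B"
    and D0: "\<And>t. t \<in> {a..b} \<Longrightarrow> 0 \<le> D t"
  shows "\<bar>LINT t:{a..b}|lborel. h t * D t\<bar> \<le> C * (LINT t:{a..b}|lborel. D t)"
proof -
  have C0: "0 \<le> C" using hb[of 0] by auto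
  have hu: "h t \<le> C" "- C \<le> h t" for t using hb[of t] by linarith+
  have b1: "\<bar>h t * D t\<bar> \<le> C * B" if "t \<in> {a..b}" for t
    using hb[of t] Db[OF that] C0 by (auto simp: abs_mult intro: mult_mono)
  have b2: "\<bar>C * D t\<bar> \<le> C * B" if "t \<in> {a..b}" for t
    using Db[OF that] C0 by (auto simp: abs_mult intro: mult_mono)
  have b3: "\<bar>- (C * D t)\<bar> \<le> C * B" if "t \<in> {a..b}" for t
    using b2[OF that] by simp
  have u: "(LINT t:{a..b}|lborel. h t * D t) \<le> (LINT t:{a..b}|lborel. C * D t)"
  proof (rule si_mono[OF _ _ b1 b2])
    fix t assume "t \<in> {a..b}" then show "h t * D t \<le> C * D t"
      using hu D0 by (auto intro: mult_right_mono)
  qed (use hm Dm in auto)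
  have l: "(LINT t:{a..b}|lborel. - (C * D t)) \<le> (LINT t:{a..b}|lborel. h t * D t)"
  proof (rule si_mono[OF _ _ b3 b1])
    fix t assume "t \<in> {a..b}" then show "- (C * D t) \<le> h t * D t"
      using mult_right_mono[OF hu(2)[of t] D0] by simp
  qed (use hm Dm in auto)
  have l': "(LINT t:{a..b}|lborel. - (C * D t)) = - (LINT t:{a..b}|lborel. C * D t)"
    by (rule set_integral_uminus) (rule si_int[OF _ b2], use Dm in simp)
  show ?thesis using u l l' by simp
qed

lemma Kn_cont[continuous_intros]: "continuous_on A (\<lambda>w. Kn m (x - w))"
  unfolding Kn_def by (intro continuous_intros) auto

lemma prod_bound:
  fixes a b :: real
  shows "\<bar>a\<bar> \<le> C \<Longrightarrow> \<bar>b\<bar> \<le> P \<Longrightarrow> \<bar>a * b\<bar> \<le> C * P"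
  unfolding abs_mult by (rule mult_mono) auto

lemma diff_bound:
  assumes hm[measurable]: "h \<in> borel_measurable borel" and hb: "\<And>t. \<bar>h t\<bar> \<le> C"
    and x: "0 \<le> x"
  shows "\<bar>(S ^^ Suc (Suc n)) h x - (S ^^ Suc n) h x\<bar> \<le> 2 * C * Kn (Suc (Suc n)) (Suc n)"
proof -
  define D where "D w = Kn (Suc (Suc n)) (x - w) - Kn (Suc n) (x - w)" for w
  define \<Phi> where "\<Phi> w = Kn (Suc (Suc n)) (x - w)" for w
  define B where "B = x ^ Suc n / fact (Suc n) + x ^ n / fact n"
  have C0: "0 \<le> C" using hb[of 0] by auto
  have Dm[measurable]: "D \<in> borel_measurable borel" unfolding D_def by measurable
  have mDm[measurable]: "(\<lambda>w. - D w) \<in> borel_measurable borel" unfolding D_def by measurable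
  have K1: "\<bar>Kn (Suc n) (x - w)\<bar> \<le> x ^ n / fact n" if "w \<in> {0..x}" for w
    using that Kn_le_pow[of "x - w" x "Suc n"] Kn_nonneg[of "x - w" "Suc n"] by auto
  have K2: "\<bar>Kn (Suc (Suc n)) (x - w)\<bar> \<le> x ^ Suc n / fact (Suc n)" if "w \<in> {0..x}" for w
    using that Kn_le_pow[of "x - w" x "Suc (Suc n)"] Kn_nonneg[of "x - w" "Suc (Suc n)"] by auto
  have DB: "\<bar>D w\<bar> \<le> B" if "w \<in> {0..x}" for w
    using K1[OF that] K2[OF that] unfolding D_def B_def by linarith
  have mDB: "\<bar>- D w\<bar> \<le> B" if "w \<in> {0..x}" for w using DB[OF that] by simp
  have hDB: "\<bar>h w * D w\<bar> \<le> C * B" if "w \<in> {0..x}" for w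
    using hb[of w] DB[OF that] C0 by (auto simp: abs_mult intro: mult_mono)
  have Dsign: "D w = Kn (Suc n) (x - w) * ((x - w) / real (Suc n) - 1)" for w
    unfolding D_def Kn_Suc by (simp add: algebra_simps)
  have Dpos: "0 \<le> D w" if "real (Suc n) \<le> x - w" for w
  proof -
    have "0 \<le> x - w" using that by linarith
    then show ?thesis unfolding Dsign using that
      by (intro mult_nonneg_nonneg Kn_nonneg) (auto simp: field_simps)
  qed
  have Dneg: "0 \<le> - D w" if "0 \<le> x - w" "x - w \<le> real (Suc n)" for w
  proof -
    have "(x - w) / real (Suc n) \<le> 1" using that by (auto simp: field_simps)
    then show ?thesis unfolding Dsign using Kn_nonneg[OF that(1), of "Suc n"]
      by (simp add: mult_nonneg_nonpos)
  qed
  have intD: "(LINT w:{a..b}|lborel. D w) = \<Phi> b - \<Phi> a" if "a \<le> b" for a b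
    by (rule si_ftc[OF that]) (auto simp: D_def \<Phi>_def intro: Kn_deriv intro!: continuous_intros)
  have intmD: "(LINT w:{a..b}|lborel. - D w) = \<Phi> a - \<Phi> b" if "a \<le> b" for a b
  proof -
    have "(LINT w:{a..b}|lborel. - D w) = (- \<Phi> b) - (- \<Phi> a)"
    proof (rule si_ftc[OF that])
      fix w
      show "((\<lambda>w. - \<Phi> w) has_real_derivative - D w) (at w)"
        unfolding D_def \<Phi>_def by (rule DERIV_minus[OF Kn_deriv])
    qed (auto simp: D_def intro!: continuous_intros)
    then show ?thesis by simp
  qed
  have Phi0: "0 \<le> \<Phi> w" if "w \<le> x" for w using that by (simp add: \<Phi>_def Kn_nonneg)
  have PhiM: "\<Phi> w \<le> Kn (Suc (Suc n)) (Suc n)" if "w \<le> x" for w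
    using that Kn_max[of "x - w" n] by (simp add: \<Phi>_def)
  have signed1: "\<bar>LINT w:{a..b}|lborel. h w * D w\<bar> \<le> C * (\<Phi> b - \<Phi> a)"
    if "0 \<le> a" "a \<le> b" "b \<le> x" "\<And>w. w \<in> {a..b} \<Longrightarrow> 0 \<le> D w" for a b
  proof -
    have "\<bar>LINT w:{a..b}|lborel. h w * D w\<bar> \<le> C * (LINT w:{a..b}|lborel. D w)"
    proof (rule abs_int_signed[OF hm hb Dm, of a b B])
      fix t assume t: "t \<in> {a..b}"
      then show "\<bar>D t\<bar> \<le> B" using DB[of t] that by auto
      show "0 \<le> D t" using t that by auto
    qed
    then show ?thesis using intD[OF that(2)] by simp
  qed
  have signed2: "\<bar>LINT w:{a..b}|lborel. h w * D w\<bar> \<le> C * (\<Phi> a - \<Phi> b)"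
    if "0 \<le> a" "a \<le> b" "b \<le> x" "\<And>w. w \<in> {a..b} \<Longrightarrow> 0 \<le> - D w" for a b
  proof -
    have "\<bar>LINT w:{a..b}|lborel. (- h w) * (- D w)\<bar> \<le> C * (LINT w:{a..b}|lborel. - D w)"
    proof (rule abs_int_signed[of "\<lambda>t. - h t" C "\<lambda>t. - D t" a b B])
      fix t assume t: "t \<in> {a..b}"
      then show "\<bar>- D t\<bar> \<le> B" using mDB[of t] that by auto
      show "0 \<le> - D t" using t that by auto
    qed (use hb in auto)
    then show ?thesis using intmD[OF that(2)] by simp
  qed
  have "(S ^^ Suc (Suc n)) h x - (S ^^ Suc n) h x =
        (LINT w:{0..x}|lborel. h w * Kn (Suc (Suc n)) (x - w)) - (LINT w:{0..x}|lborel. h w * Kn (Suc n) (x - w))"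
    using kernel_formula[OF hm hb x, of n] kernel_formula[OF hm hb x, of "Suc n"] by simp
  also have "\<dots> = (LINT w:{0..x}|lborel. h w * Kn (Suc (Suc n)) (x - w) - h w * Kn (Suc n) (x - w))"
  proof (rule set_integral_diff(2)[symmetric])
    show "set_integrable lborel {0..x} (\<lambda>w. h w * Kn (Suc (Suc n)) (x - w))"
      by (rule si_int[where M="C * (x ^ Suc n / fact (Suc n))"]) (use prod_bound[OF hb K2] in auto)
    show "set_integrable lborel {0..x} (\<lambda>w. h w * Kn (Suc n) (x - w))"
      by (rule si_int[where M="C * (x ^ n / fact n)"]) (use prod_bound[OF hb K1] in auto)
  qed
  also have "\<dots> = (LINT w:{0..x}|lborel. h w * D w)"
    by (rule si_cong) (simp add: D_def right_diff_distrib)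
  finally have eq: "(S ^^ Suc (Suc n)) h x - (S ^^ Suc n) h x = (LINT w:{0..x}|lborel. h w * D w)" .
  show ?thesis
  proof (cases "x \<le> real (Suc n)")
    case True
    have "\<bar>LINT w:{0..x}|lborel. h w * D w\<bar> \<le> C * (\<Phi> 0 - \<Phi> x)"
    proof (rule signed2)
      fix w assume "w \<in> {0..x}" then show "0 \<le> - D w" using True by (intro Dneg) auto
    qed (use x in auto)
    also have "\<dots> \<le> C * (Kn (Suc (Suc n)) (Suc n) - 0)"
      using Phi0[of x] PhiM[of 0] x C0 by (intro mult_left_mono) auto
    also have "\<dots> \<le> 2 * C * Kn (Suc (Suc n)) (Suc n)"
      using C0 Kn_nonneg[of "real (Suc n)" "Suc (Suc n)"] by simp
    finally show ?thesis using eq by simp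
  next
    case False
    define c where "c = x - real (Suc n)"
    have c: "0 \<le> c" "c \<le> x" using False by (auto simp: c_def)
    have "(LINT w:{0..x}|lborel. h w * D w) = (LINT w:{0..c}|lborel. h w * D w) + (LINT w:{c..x}|lborel. h w * D w)"
      by (rule si_split[where M="C * B"]) (use hDB c in auto)
    moreover have "\<bar>LINT w:{0..c}|lborel. h w * D w\<bar> \<le> C * (\<Phi> c - \<Phi> 0)"
    proof (rule signed1)
      fix w assume "w \<in> {0..c}" then show "0 \<le> D w" by (intro Dpos) (auto simp: c_def)
    qed (use c in auto)
    moreover have "\<bar>LINT w:{c..x}|lborel. h w * D w\<bar> \<le> C * (\<Phi> c - \<Phi> x)"
    proof (rule signed2)
      fix w assume "w \<in> {c..x}" then show "0 \<le> - D w" by (intro Dneg) (auto simp: c_def)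
    qed (use c in auto)
    moreover have "C * (\<Phi> c - \<Phi> 0) \<le> C * Kn (Suc (Suc n)) (Suc n)"
      using Phi0[of 0] PhiM[of c] x c C0 by (intro mult_left_mono) auto
    moreover have "C * (\<Phi> c - \<Phi> x) \<le> C * Kn (Suc (Suc n)) (Suc n)"
      using Phi0[of x] PhiM[of c] x c C0 by (intro mult_left_mono) auto
    ultimately show ?thesis using eq by linarith
  qed
qed

lemma Kn_lower:
  assumes N4: "4 \<le> real (Suc n)" and w: "0 \<le> w" "w \<le> sqrt (real (Suc n))"
  shows "Kn (Suc (Suc n)) (Suc n) * exp (- 2) \<le> Kn (Suc (Suc n)) (real (Suc n) - w)"
proof -
  define N where "N = real (Suc n)"
  have N0: "0 < N" by (simp add: N_def)
  have sN: "sqrt N \<le> N / 2"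
  proof -
    have "sqrt N * sqrt N = N" using N0 by simp
    moreover have "2 \<le> sqrt N" using N4 real_le_rsqrt[of 2 N] by (simp add: N_def)
    moreover have "2 * sqrt N \<le> sqrt N * sqrt N"
      using \<open>2 \<le> sqrt N\<close> N0 by (intro mult_right_mono) auto
    ultimately show ?thesis by linarith
  qed
  define t where "t = w / N"
  have t: "0 \<le> t" "t \<le> 1/2" using w sN N0 N_def by (auto simp: t_def field_simps)
  have wt: "w = N * t" using N0 by (simp add: t_def)
  have tt: "N * t\<^sup>2 \<le> 1"
  proof -
    have "w\<^sup>2 \<le> (sqrt N)\<^sup>2" using w N_def by (intro power_mono) auto
    also have "\<dots> = N" using N0 by simp
    finally have "w\<^sup>2 \<le> N" .
    then show ?thesis using N0 by (simp add: wt power2_eq_square field_simps)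
  qed
  have lnb: "- t - 2 * t\<^sup>2 \<le> ln (1 - t)" by (rule ln_one_minus_pos_lower_bound) (use t in auto)
  have pos: "0 < 1 - t" using t by simp
  have "(1 - t) ^ Suc n = exp (ln (1 - t)) ^ Suc n" using pos by simp
  also have "\<dots> = exp (N * ln (1 - t))" unfolding N_def by (rule exp_of_nat_mult[symmetric])
  also have "\<dots> \<ge> exp (N * (- t - 2 * t\<^sup>2))"
    using lnb N0 by (simp add: mult_left_mono)
  finally have p1: "exp (N * (- t - 2 * t\<^sup>2)) \<le> (1 - t) ^ Suc n" .
  have "exp (- 2) * exp (- N) \<le> exp (N * (- t - 2 * t\<^sup>2)) * exp (- (N - w))"
  proof -
    have "- 2 + - N \<le> N * (- t - 2 * t\<^sup>2) + - (N - w)"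
      using tt by (simp add: wt algebra_simps)
    then show ?thesis by (simp add: exp_add[symmetric])
  qed
  also have "\<dots> \<le> (1 - t) ^ Suc n * exp (- (N - w))"
    using p1 by (intro mult_right_mono) auto
  finally have key: "exp (- 2) * exp (- N) \<le> (1 - t) ^ Suc n * exp (- (N - w))" .
  have rN: "(N - w) ^ Suc n = N ^ Suc n * (1 - t) ^ Suc n"
    using N0 by (simp add: wt power_mult_distrib[symmetric] algebra_simps)
  have "N ^ Suc n * exp (- N) * exp (- 2) \<le> N ^ Suc n * ((1 - t) ^ Suc n * exp (- (N - w)))"
    using mult_left_mono[OF key, of "N ^ Suc n"] N0 by (simp add: algebra_simps)
  then have "N ^ Suc n * exp (- N) * exp (- 2) / fact (Suc n) \<le> (N - w) ^ Suc n * exp (- (N - w)) / fact (Suc n)"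
    unfolding rN by (intro divide_right_mono) (auto simp: mult.assoc)
  then show ?thesis unfolding Kn_def diff_Suc_1 N_def by (simp add: algebra_simps)
qed

lemma Kn_small:
  assumes N4: "4 \<le> real (Suc n)"
  shows "Kn (Suc (Suc n)) (Suc n) \<le> exp 2 / sqrt (real (Suc n))"
proof -
  define N where "N = real (Suc n)"
  define L where "L = sqrt N"
  define K where "K = Kn (Suc (Suc n)) (Suc n)"
  have N0: "0 < N" by (simp add: N_def)
  have L0: "0 < L" using N0 by (simp add: L_def)
  have LN: "L \<le> N"
  proof -
    have "1 \<le> N" using N4 by (simp add: N_def)
    then have "sqrt N \<le> sqrt N * sqrt N" by (intro mult_le_cancel_left1[THEN iffD2] impI) (auto simp: real_le_rsqrt)
    then show ?thesis using N0 by (simp add: L_def)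
  qed
  have Kb: "\<bar>Kn (Suc (Suc n)) (N - w)\<bar> \<le> N ^ Suc n / fact (Suc n)" if "w \<in> {0..N}" for w
    using that Kn_le_pow[of "N - w" N "Suc (Suc n)"] Kn_nonneg[of "N - w" "Suc (Suc n)"] by auto
  have "(S ^^ Suc (Suc n)) (\<lambda>_. 1) N = (LINT w:{0..N}|lborel. 1 * Kn (Suc (Suc n)) (N - w))"
    by (rule kernel_formula[where C=1]) (use N0 in auto)
  moreover have "\<bar>(S ^^ Suc (Suc n)) (\<lambda>_. 1) N\<bar> \<le> 1"
    using iter_props[of "\<lambda>_. 1" 1 "Suc (Suc n)"] by auto
  ultimately have I1: "(LINT w:{0..N}|lborel. Kn (Suc (Suc n)) (N - w)) \<le> 1" by simp
  have "(LINT w:{0..N}|lborel. Kn (Suc (Suc n)) (N - w)) =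
        (LINT w:{0..L}|lborel. Kn (Suc (Suc n)) (N - w)) + (LINT w:{L..N}|lborel. Kn (Suc (Suc n)) (N - w))"
    by (rule si_split[where M="N ^ Suc n / fact (Suc n)"]) (use Kb L0 LN in auto)
  moreover have "(LINT w:{L..N}|lborel. (0::real)) \<le> (LINT w:{L..N}|lborel. Kn (Suc (Suc n)) (N - w))"
    by (rule si_mono[where M="N ^ Suc n / fact (Suc n)"]) (use Kb L0 LN in \<open>auto intro: Kn_nonneg\<close>)
  moreover have "(LINT w:{0..L}|lborel. K * exp (- 2)) \<le> (LINT w:{0..L}|lborel. Kn (Suc (Suc n)) (N - w))"
  proof (rule si_mono[where M="max (N ^ Suc n / fact (Suc n)) \<bar>K * exp (-2)\<bar>"])
    fix t assume t: "t \<in> {0..L}"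
    show "K * exp (- 2) \<le> Kn (Suc (Suc n)) (N - t)"
      unfolding K_def N_def by (rule Kn_lower) (use N4 t in \<open>auto simp: L_def N_def\<close>)
    show "\<bar>Kn (Suc (Suc n)) (N - t)\<bar> \<le> max (N ^ Suc n / fact (Suc n)) \<bar>K * exp (-2)\<bar>"
      using Kb[of t] t LN by auto
  qed auto
  moreover have "(LINT w:{0..L}|lborel. K * exp (- 2)) = K * exp (- 2) * L"
    using si_const[of 0 L "K * exp (- 2)"] L0 by simp
  moreover have "(LINT w:{L..N}|lborel. (0::real)) = 0" by simp
  ultimately have "K * exp (- 2) * L \<le> 1" using I1 by linarith
  then have "K * L \<le> exp 2" by (simp add: exp_minus field_simps)
  then show ?thesis using L0 by (simp add: K_def L_def N_def field_simps)
qed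



lemma S_int_raw:
  assumes hm[measurable]: "h \<in> borel_measurable borel" and hb: "\<And>t. \<bar>h t\<bar> \<le> C"
    and ab: "0 \<le> a" "a \<le> b"
  shows "(LINT s:{a..b}|lborel. S h s) = (LINT w:{0..b}|lborel. h w * (exp (w - max a w) - exp (w - b)))"
proof -
  have "(LINT s:{a..b}|lborel. S h s) = (LINT s:{a..b}|lborel. LINT w:{0..s}|lborel. h w * exp (w - s))"
    by (simp add: S_alt)
  also have "\<dots> = (LINT w:{0..b}|lborel. h w * (LINT s:{max a w..b}|lborel. exp (w - s)))"
    by (rule tri_swap[where C=C and K=1]) (use hb ab in \<open>auto\<close>)
  also have "\<dots> = (LINT w:{0..b}|lborel. h w * (exp (w - max a w) - exp (w - b)))"
  proof (rule si_cong)
    fix w assume w: "w \<in> {0..b}"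
    have "(LINT s:{max a w..b}|lborel. exp (w - s)) = (- exp (w - b)) - (- exp (w - max a w))"
      by (rule si_ftc) (use w ab in \<open>auto intro!: derivative_eq_intros continuous_intros\<close>)
    then show "h w * (LINT s:{max a w..b}|lborel. exp (w - s)) = h w * (exp (w - max a w) - exp (w - b))"
      by simp
  qed
  finally show ?thesis .
qed

lemma Bav_bound:
  assumes hm[measurable]: "h \<in> borel_measurable borel" and hb: "\<And>t. \<bar>h t\<bar> \<le> C" and th: "0 < \<theta>"
  shows "\<bar>Bav \<theta> h x\<bar> \<le> C"
proof -
  have "\<bar>LINT t:{x..x+\<theta>}|lborel. h t\<bar> \<le> C * (x + \<theta> - x)"
    by (rule si_bound) (use hb th in auto)
  then show ?thesis using th by (simp add: Bav_def abs_mult field_simps)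
qed

lemma Bav_S_diff:
  assumes hm[measurable]: "h \<in> borel_measurable borel" and hb: "\<And>t. \<bar>h t\<bar> \<le> C" and th: "0 < \<theta>"
    and x: "0 \<le> x"
  shows "\<bar>Bav \<theta> (S h) x - Bav \<theta> h x\<bar> \<le> 2 * C / \<theta>"
proof -
  have "(LINT s:{x..x+\<theta>}|lborel. S h s) = S h x + (LINT s:{x..x+\<theta>}|lborel. h s) - S h (x + \<theta>)"
    by (rule S_int[OF hm hb]) (use x th in auto)
  then have "Bav \<theta> (S h) x - Bav \<theta> h x = (S h x - S h (x + \<theta>)) / \<theta>"
    unfolding Bav_def by (simp add: diff_divide_distrib[symmetric])
  moreover have "\<bar>S h x - S h (x + \<theta>)\<bar> \<le> 2 * C"
    using S_bound[OF hm hb, of x] S_bound[OF hm hb, of "x + \<theta>"] by linarith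
  ultimately show ?thesis using th by (simp add: abs_divide divide_right_mono)
qed

lemma iterS_lip:
  assumes hm[measurable]: "h \<in> borel_measurable borel" and hb: "\<And>t. \<bar>h t\<bar> \<le> C"
    and ab: "0 \<le> a" "a \<le> b"
  shows "\<bar>(S ^^ Suc (Suc n)) h b - (S ^^ Suc (Suc n)) h a\<bar> \<le> (b - a) * (2 * C * Kn (Suc (Suc n)) (Suc n))"
proof -
  let ?u = "(S ^^ Suc n) h"
  have um[measurable]: "?u \<in> borel_measurable borel" and ub: "\<And>t. \<bar>?u t\<bar> \<le> C"
    using iter_props[OF hm hb, of "Suc n"] by auto
  have Sum[measurable]: "S ?u \<in> borel_measurable borel" by (rule S_meas[OF um])
  have Sub: "\<And>t. \<bar>S ?u t\<bar> \<le> C" by (rule S_bound[OF um ub])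
  have "(LINT s:{a..b}|lborel. S ?u s) = S ?u a + (LINT s:{a..b}|lborel. ?u s) - S ?u b"
    by (rule S_int[OF um ub ab])
  then have "S ?u b - S ?u a = (LINT s:{a..b}|lborel. ?u s) - (LINT s:{a..b}|lborel. S ?u s)" by simp
  also have "\<dots> = (LINT s:{a..b}|lborel. ?u s - S ?u s)"
    by (rule set_integral_diff(2)[symmetric]; rule si_int[where M=C]) (use ub Sub um Sum in auto)
  finally have eq: "S ?u b - S ?u a = (LINT s:{a..b}|lborel. ?u s - S ?u s)" .
  have "\<bar>LINT s:{a..b}|lborel. ?u s - S ?u s\<bar> \<le> (2 * C * Kn (Suc (Suc n)) (Suc n)) * (b - a)"
  proof (rule si_bound)
    show "(\<lambda>t. ?u t - S ?u t) \<in> borel_measurable borel" using um Sum by measurable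
    fix t assume t: "t \<in> {a..b}"
    show "\<bar>?u t - S ?u t\<bar> \<le> 2 * C * Kn (Suc (Suc n)) (Suc n)"
      using diff_bound[OF hm hb, of t n] t ab by (simp add: abs_minus_commute)
  qed (use ab in auto)
  then show ?thesis using eq by (simp add: mult.commute)
qed

lemma iterS_Bav:
  assumes hm[measurable]: "h \<in> borel_measurable borel" and hb: "\<And>t. \<bar>h t\<bar> \<le> C"
    and x: "0 \<le> x" and th: "0 < \<theta>"
  shows "\<bar>(S ^^ Suc (Suc n)) h x - Bav \<theta> ((S ^^ Suc (Suc n)) h) x\<bar> \<le> \<theta> * (2 * C * Kn (Suc (Suc n)) (Suc n))"
proof -
  let ?u = "(S ^^ Suc (Suc n)) h"
  define L where "L = 2 * C * Kn (Suc (Suc n)) (Suc n)"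
  have um[measurable]: "?u \<in> borel_measurable borel" and ub: "\<And>t. \<bar>?u t\<bar> \<le> C"
    using iter_props[OF hm hb, of "Suc (Suc n)"] by auto
  have "(LINT t:{x..x+\<theta>}|lborel. ?u t - ?u x) = (LINT t:{x..x+\<theta>}|lborel. ?u t) - (LINT t:{x..x+\<theta>}|lborel. ?u x)"
  proof (rule set_integral_diff(2))
    show "set_integrable lborel {x..x + \<theta>} ?u" by (rule si_int[where M=C]) (use ub um in auto)
    show "set_integrable lborel {x..x + \<theta>} (\<lambda>t. ?u x)" by (rule si_int[where M="\<bar>?u x\<bar>"]) auto
  qed
  also have "(LINT t:{x..x+\<theta>}|lborel. ?u x) = ?u x * \<theta>" using si_const[of x "x + \<theta>" "?u x"] th by simp
  finally have eq: "(LINT t:{x..x+\<theta>}|lborel. ?u t - ?u x) = (LINT t:{x..x+\<theta>}|lborel. ?u t) - ?u x * \<theta>" .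
  have "\<bar>LINT t:{x..x+\<theta>}|lborel. ?u t - ?u x\<bar> \<le> (\<theta> * L) * (x + \<theta> - x)"
  proof (rule si_bound)
    show "(\<lambda>t. ?u t - ?u x) \<in> borel_measurable borel" using um by measurable
    fix t assume t: "t \<in> {x..x+\<theta>}"
    have "\<bar>?u t - ?u x\<bar> \<le> (t - x) * L" unfolding L_def by (rule iterS_lip[OF hm hb]) (use t x in auto)
    also have "\<dots> \<le> \<theta> * L"
      using t Kn_nonneg[of "real (Suc n)" "Suc (Suc n)"] hb[of 0] unfolding L_def
      by (intro mult_right_mono) auto
    finally show "\<bar>?u t - ?u x\<bar> \<le> \<theta> * L" .
  qed (use th in auto)
  then have "\<bar>(LINT t:{x..x+\<theta>}|lborel. ?u t) - ?u x * \<theta>\<bar> \<le> \<theta> * L * \<theta>" using eq by simp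
  then have A1: "\<bar>((LINT t:{x..x+\<theta>}|lborel. ?u t) - ?u x * \<theta>) / \<theta>\<bar> \<le> \<theta> * L"
    using th by (simp add: abs_divide divide_le_eq)
  have A2: "((LINT t:{x..x+\<theta>}|lborel. ?u t) - ?u x * \<theta>) / \<theta> = Bav \<theta> ?u x - ?u x"
    using th by (simp add: Bav_def diff_divide_distrib)
  have "\<bar>Bav \<theta> ?u x - ?u x\<bar> \<le> \<theta> * L" using A1 unfolding A2 .
  then show ?thesis unfolding L_def by (subst abs_minus_commute)
qed

lemma Bav_S_comm:
  assumes hm[measurable]: "h \<in> borel_measurable borel" and hb: "\<And>t. \<bar>h t\<bar> \<le> C"
    and x: "0 \<le> x" and th: "0 < \<theta>"
  shows "\<bar>Bav \<theta> (S h) x - S (Bav \<theta> h) x\<bar> \<le> C * exp (- x)"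
proof -
  have C0: "0 \<le> C" using hb[of 0] by auto
  have hm2: "h \<in> borel_measurable lborel" using hm by (simp add: measurable_lborel1)
  define E where "E w = exp (max 0 (w - \<theta>) - x) - exp (w - (x + \<theta>))" for w
  have Em[measurable]: "E \<in> borel_measurable borel" unfolding E_def by measurable
  have E0: "0 \<le> E w" for w unfolding E_def by simp
  have E1: "E w \<le> exp (- x)" if "w \<le> \<theta>" for w
    using that unfolding E_def by (simp add: max_def)
  have Ez: "E w = 0" if "\<theta> \<le> w" for w
    using that unfolding E_def by (simp add: max_def algebra_simps)
  have Eb: "\<bar>E w\<bar> \<le> 1" if "w \<le> x + \<theta>" for w
  proof -
    have "E w \<le> exp (max 0 (w - \<theta>) - x)" unfolding E_def by simp
    also have "\<dots> \<le> 1" using x th that by (cases "w \<le> \<theta>") (auto simp: max_def)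
    finally show ?thesis using E0[of w] by simp
  qed
  have hexp: "\<bar>h w * exp (w - c)\<bar> \<le> C" if "w \<le> c" for w c by (rule hexp_bound[OF hb that])
  have A: "(LINT s:{x..x+\<theta>}|lborel. S h s) = (LINT w:{0..x+\<theta>}|lborel. h w * (exp (min x w - x) - exp (w - (x + \<theta>))))"
  proof -
    have "(LINT s:{x..x+\<theta>}|lborel. S h s) = (LINT w:{0..x+\<theta>}|lborel. h w * (exp (w - max x w) - exp (w - (x + \<theta>))))"
      by (rule S_int_raw[OF hm hb]) (use x th in auto)
    also have "\<dots> = (LINT w:{0..x+\<theta>}|lborel. h w * (exp (min x w - x) - exp (w - (x + \<theta>))))"
      by (rule si_cong) (simp add: max_def min_def)
    finally show ?thesis .
  qed
  define F where "F t w = (if t \<le> w \<and> w \<le> t + \<theta> then h w * exp (t - x) else 0)" for t w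
  have Fm: "case_prod F \<in> borel_measurable (lborel \<Otimes>\<^sub>M lborel)"
    unfolding F_def using hm2 by measurable
  have B: "\<theta> * S (Bav \<theta> h) x = (LINT w:{0..x+\<theta>}|lborel. h w * (exp (min x w - x) - exp (max 0 (w - \<theta>) - x)))"
  proof -
    have "\<theta> * S (Bav \<theta> h) x = (LINT t:{0..x}|lborel. \<theta> * (Bav \<theta> h t * exp (t - x)))"
      by (simp add: S_alt)
    also have "\<dots> = (LINT t:{0..x}|lborel. LINT w:{0..x+\<theta>}|lborel. F t w)"
    proof (rule si_cong)
      fix t assume t: "t \<in> {0..x}"
      have "\<theta> * (Bav \<theta> h t * exp (t - x)) = (LINT w:{t..t+\<theta>}|lborel. h w) * exp (t - x)"
        using th by (simp add: Bav_def)
      also have "\<dots> = (LINT w:{t..t+\<theta>}|lborel. h w * exp (t - x))" by simp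
      also have "\<dots> = (LINT w:{0..x+\<theta>}|lborel. F t w)"
        unfolding set_lebesgue_integral_def
        by (rule Bochner_Integration.integral_cong[OF refl]) (use t in \<open>auto simp: F_def indicator_def\<close>)
      finally show "\<theta> * (Bav \<theta> h t * exp (t - x)) = (LINT w:{0..x+\<theta>}|lborel. F t w)" .
    qed
    also have "\<dots> = (LINT w:{0..x+\<theta>}|lborel. LINT t:{0..x}|lborel. F t w)"
    proof (rule fubini_rect[OF Fm, where M=C])
      fix t w assume "t \<in> {0..x}" "w \<in> {0..x+\<theta>}"
      then show "\<bar>F t w\<bar> \<le> C" using hexp_bound[OF hb[of w], of t x] C0 by (auto simp: F_def)
    qed
    also have "\<dots> = (LINT w:{0..x+\<theta>}|lborel. h w * (exp (min x w - x) - exp (max 0 (w - \<theta>) - x)))"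
    proof (rule si_cong)
      fix w assume w: "w \<in> {0..x+\<theta>}"
      have "(LINT t:{0..x}|lborel. F t w) = (LINT t:{max 0 (w - \<theta>)..min x w}|lborel. h w * exp (t - x))"
        unfolding set_lebesgue_integral_def
        by (rule Bochner_Integration.integral_cong[OF refl]) (auto simp: F_def indicator_def)
      also have "\<dots> = h w * (LINT t:{max 0 (w - \<theta>)..min x w}|lborel. exp (t - x))" by simp
      also have "(LINT t:{max 0 (w - \<theta>)..min x w}|lborel. exp (t - x)) = exp (min x w - x) - exp (max 0 (w - \<theta>) - x)"
        by (rule si_ftc) (use w x th in \<open>auto intro!: derivative_eq_intros continuous_intros\<close>)
      finally show "(LINT t:{0..x}|lborel. F t w) = h w * (exp (min x w - x) - exp (max 0 (w - \<theta>) - x))" .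
    qed
    finally show ?thesis .
  qed
  have ediff: "\<bar>h w * (a - b)\<bar> \<le> C" if "0 \<le> a" "a \<le> 1" "0 \<le> b" "b \<le> 1" for w a b :: real
    using prod_bound[OF hb[of w], of "a - b" 1] that by simp
  have "(LINT w:{0..x+\<theta>}|lborel. h w * (exp (min x w - x) - exp (w - (x + \<theta>)))) - \<theta> * S (Bav \<theta> h) x
      = (LINT w:{0..x+\<theta>}|lborel. h w * (exp (min x w - x) - exp (w - (x + \<theta>))) - h w * (exp (min x w - x) - exp (max 0 (w - \<theta>) - x)))"
    unfolding B
  proof (rule set_integral_diff(2)[symmetric])
    show "set_integrable lborel {0..x + \<theta>} (\<lambda>w. h w * (exp (min x w - x) - exp (w - (x + \<theta>))))"
      by (rule si_int[where M=C]) (auto intro!: ediff)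
    show "set_integrable lborel {0..x + \<theta>} (\<lambda>w. h w * (exp (min x w - x) - exp (max 0 (w - \<theta>) - x)))"
      by (rule si_int[where M=C]) (use x in \<open>auto intro!: ediff simp: max_def\<close>)
  qed
  also have "\<dots> = (LINT w:{0..x+\<theta>}|lborel. h w * E w)"
    by (rule si_cong) (simp add: E_def algebra_simps)
  finally have AB: "(LINT s:{x..x+\<theta>}|lborel. S h s) - \<theta> * S (Bav \<theta> h) x = (LINT w:{0..x+\<theta>}|lborel. h w * E w)"
    using A by simp
  have "\<bar>LINT w:{0..x+\<theta>}|lborel. h w * E w\<bar> \<le> C * (LINT w:{0..x+\<theta>}|lborel. E w)"
    by (rule abs_int_signed[OF hm hb Em, where B=1]) (auto intro: Eb E0)
  also have "(LINT w:{0..x+\<theta>}|lborel. E w) = (LINT w:{0..\<theta>}|lborel. E w) + (LINT w:{\<theta>..x+\<theta>}|lborel. E w)"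
    by (rule si_split[where M=1]) (use x th in \<open>auto intro: Eb\<close>)
  also have "(LINT w:{\<theta>..x+\<theta>}|lborel. E w) = (LINT w:{\<theta>..x+\<theta>}|lborel. 0)"
    by (rule si_cong) (auto intro: Ez)
  also have "(LINT w:{0..\<theta>}|lborel. E w) \<le> exp (- x) * (\<theta> - 0)"
  proof -
    have "\<bar>LINT w:{0..\<theta>}|lborel. E w\<bar> \<le> exp (- x) * (\<theta> - 0)"
      by (rule si_bound) (use th E0 E1 in auto)
    then show ?thesis by simp
  qed
  finally have "\<bar>LINT w:{0..x+\<theta>}|lborel. h w * E w\<bar> \<le> C * (exp (- x) * \<theta>)"
    using C0 by (simp add: mult_left_mono)
  then have "\<bar>\<theta> * Bav \<theta> (S h) x - \<theta> * S (Bav \<theta> h) x\<bar> \<le> \<theta> * (C * exp (- x))"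
    using AB th by (simp add: Bav_def algebra_simps)
  then have "\<theta> * \<bar>Bav \<theta> (S h) x - S (Bav \<theta> h) x\<bar> \<le> \<theta> * (C * exp (- x))"
    using th by (simp add: abs_mult right_diff_distrib[symmetric])
  then show ?thesis using th by simp
qed



lemma LS_main:
  fixes a b :: "real \<Rightarrow> real"
  assumes A: "\<And>y e. Limsup at_top (\<lambda>x. ereal (b x)) < ereal y \<Longrightarrow> 0 < e \<Longrightarrow> eventually (\<lambda>x. a x < y + e) at_top"
  shows "Limsup at_top (\<lambda>x. ereal (a x)) \<le> Limsup at_top (\<lambda>x. ereal (b x))"
  unfolding Limsup_le_iff
proof (intro allI impI)
  fix z assume z: "Limsup at_top (\<lambda>x. ereal (b x)) < z"
  show "eventually (\<lambda>x. z > ereal (a x)) at_top"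
  proof (cases z)
    case (real r)
    obtain y where y: "Limsup at_top (\<lambda>x. ereal (b x)) < ereal y" "ereal y < z"
      using ereal_dense2[OF z] by blast
    have "y < r" using y real by simp
    then have "eventually (\<lambda>x. a x < y + (r - y)) at_top" using A[OF y(1), of "r - y"] by simp
    then show ?thesis using real by (auto elim: eventually_mono)
  next
    case PInf then show ?thesis by simp
  next
    case MInf then show ?thesis using z by simp
  qed
qed

lemma LS_shift:
  fixes a b :: "real \<Rightarrow> real"
  assumes "eventually (\<lambda>x. a x \<le> b x + c) at_top"
  shows "Limsup at_top (\<lambda>x. ereal (a x)) \<le> Limsup at_top (\<lambda>x. ereal (b x)) + ereal c"
proof -
  have "Limsup at_top (\<lambda>x. ereal (a x)) \<le> Limsup at_top (\<lambda>x. ereal (b x) + ereal c)"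
    by (rule Limsup_mono) (use assms in \<open>auto elim: eventually_mono\<close>)
  also have "\<dots> = Limsup at_top (\<lambda>x. ereal (b x)) + ereal c"
    by (rule Limsup_add_ereal_right) auto
  finally show ?thesis .
qed

lemma LS_err:
  fixes a b :: "real \<Rightarrow> real"
  assumes A: "\<And>e. 0 < e \<Longrightarrow> eventually (\<lambda>x. a x \<le> b x + e) at_top"
  shows "Limsup at_top (\<lambda>x. ereal (a x)) \<le> Limsup at_top (\<lambda>x. ereal (b x))"
proof (rule LS_main)
  fix y e :: real assume y: "Limsup at_top (\<lambda>x. ereal (b x)) < ereal y" and e: "0 < e"
  have "eventually (\<lambda>x. ereal (b x) < ereal y) at_top" by (rule Limsup_lessD[OF y])
  moreover have "eventually (\<lambda>x. a x \<le> b x + e / 2) at_top" using A e by simp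
  ultimately show "eventually (\<lambda>x. a x < y + e) at_top"
    by eventually_elim (use e in auto)
qed

lemma eventually_exp_small:
  fixes A X e :: real
  assumes "0 \<le> A" "0 < e"
  shows "eventually (\<lambda>x. A * exp (X - x) < e) at_top"
proof -
  have "eventually (\<lambda>x. X + A / e < x) at_top" by (rule eventually_gt_at_top)
  then show ?thesis
  proof eventually_elim
    case (elim x)
    then have x: "A / e < x - X" by simp
    have d: "0 < x - X" using x assms by (smt (verit) divide_nonneg_pos)
    have "1 + (x - X) \<le> exp (x - X)" by (rule exp_ge_add_one_self)
    then have "1 / exp (x - X) \<le> 1 / (1 + (x - X))"
      using d by (intro divide_left_mono) auto
    moreover have "exp (X - x) = 1 / exp (x - X)" by (simp add: exp_diff)
    ultimately have "A * exp (X - x) \<le> A * (1 / (1 + (x - X)))"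
      using assms by (metis mult_left_mono)
    also have "\<dots> < e"
    proof -
      have a1: "A < (x - X) * e" using x assms by (simp add: pos_divide_less_eq)
      have "A < e * (1 + (x - X))" using a1 assms(2) by (simp add: algebra_simps)
      then show ?thesis using d by (simp add: divide_less_eq)
    qed
    finally show ?case .
  qed
qed

lemma LS_S:
  assumes hm[measurable]: "h \<in> borel_measurable borel" and hb: "\<And>t. \<bar>h t\<bar> \<le> C"
  shows "Limsup at_top (\<lambda>x. ereal (S h x)) \<le> Limsup at_top (\<lambda>x. ereal (h x))"
proof (rule LS_main)
  fix y e :: real assume y: "Limsup at_top (\<lambda>x. ereal (h x)) < ereal y" and e: "0 < e"
  have C0: "0 \<le> C" using hb[of 0] by auto
  have "eventually (\<lambda>x. ereal (h x) < ereal y) at_top" by (rule Limsup_lessD[OF y])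
  then obtain X0 where X0: "\<And>x. X0 \<le> x \<Longrightarrow> h x < y" by (auto simp: eventually_at_top_linorder)
  define X where "X = max X0 0"
  have X: "0 \<le> X" "\<And>x. X \<le> x \<Longrightarrow> h x < y" using X0 by (auto simp: X_def)
  define A where "A = C * X + \<bar>y\<bar>"
  have A0: "0 \<le> A" using C0 X by (simp add: A_def)
  have "eventually (\<lambda>x. A * exp (X - x) < e) at_top" by (rule eventually_exp_small[OF A0 e])
  moreover have "eventually (\<lambda>x. X \<le> x) at_top" by (rule eventually_ge_at_top)
  ultimately show "eventually (\<lambda>x. S h x < y + e) at_top"
  proof eventually_elim
    case (elim x)
    have xX: "X \<le> x" using elim by simp
    have hx: "\<bar>h w * exp (w - x)\<bar> \<le> C" if "w \<le> x" for w by (rule hexp_bound[OF hb that])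
    have "S h x = (LINT w:{0..x}|lborel. h w * exp (w - x))" by (rule S_alt)
    also have "\<dots> = (LINT w:{0..X}|lborel. h w * exp (w - x)) + (LINT w:{X..x}|lborel. h w * exp (w - x))"
      by (rule si_split[where M=C]) (use hx X xX in auto)
    finally have Ssplit: "S h x = (LINT w:{0..X}|lborel. h w * exp (w - x)) + (LINT w:{X..x}|lborel. h w * exp (w - x))" .
    have I1: "\<bar>LINT w:{0..X}|lborel. h w * exp (w - x)\<bar> \<le> (C * exp (X - x)) * (X - 0)"
    proof (rule si_bound)
      fix w assume w: "w \<in> {0..X}"
      have "\<bar>exp (w - x)\<bar> \<le> exp (X - x)" using w by simp
      then show "\<bar>h w * exp (w - x)\<bar> \<le> C * exp (X - x)" by (rule prod_bound[OF hb])
    qed (use X in auto)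
    have I2: "(LINT w:{X..x}|lborel. h w * exp (w - x)) \<le> (LINT w:{X..x}|lborel. y * exp (w - x))"
    proof (rule si_mono[where M="max C \<bar>y\<bar>"])
      fix w assume w: "w \<in> {X..x}"
      show "\<bar>h w * exp (w - x)\<bar> \<le> max C \<bar>y\<bar>" using hx[of w] w by auto
      have "\<bar>y * exp (w - x)\<bar> \<le> \<bar>y\<bar> * 1" using w by (intro prod_bound) auto
      then show "\<bar>y * exp (w - x)\<bar> \<le> max C \<bar>y\<bar>" by simp
      show "h w * exp (w - x) \<le> y * exp (w - x)" using X(2)[of w] w by (intro mult_right_mono) auto
    qed auto
    have I3: "(LINT w:{X..x}|lborel. y * exp (w - x)) = y * exp (x - x) - y * exp (X - x)"
      by (rule si_ftc) (use xX in \<open>auto intro!: derivative_eq_intros continuous_intros\<close>)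
    have "- y * exp (X - x) \<le> \<bar>y\<bar> * exp (X - x)" by (intro mult_right_mono) auto
    then have "S h x \<le> y + (C * X + \<bar>y\<bar>) * exp (X - x)"
      using Ssplit I1 I2 I3 by (simp add: algebra_simps abs_le_iff)
    then show "S h x < y + e" using elim by (simp add: A_def)
  qed
qed

lemma LS_B:
  assumes hm[measurable]: "h \<in> borel_measurable borel" and hb: "\<And>t. \<bar>h t\<bar> \<le> C" and th: "0 < \<theta>"
  shows "Limsup at_top (\<lambda>x. ereal (Bav \<theta> h x)) \<le> Limsup at_top (\<lambda>x. ereal (h x))"
proof (rule LS_main)
  fix y e :: real assume y: "Limsup at_top (\<lambda>x. ereal (h x)) < ereal y" and e: "0 < e"
  have "eventually (\<lambda>x. ereal (h x) < ereal y) at_top" by (rule Limsup_lessD[OF y])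
  then obtain X where X: "\<And>x. X \<le> x \<Longrightarrow> h x < y" by (auto simp: eventually_at_top_linorder)
  have "eventually (\<lambda>x. X \<le> x) at_top" by (rule eventually_ge_at_top)
  then show "eventually (\<lambda>x. Bav \<theta> h x < y + e) at_top"
  proof eventually_elim
    case (elim x)
    have "(LINT t:{x..x+\<theta>}|lborel. h t) \<le> (LINT t:{x..x+\<theta>}|lborel. y)"
    proof (rule si_mono[where M="max C \<bar>y\<bar>"])
      fix t assume t: "t \<in> {x..x+\<theta>}"
      show "\<bar>h t\<bar> \<le> max C \<bar>y\<bar>" using hb[of t] by simp
      show "h t \<le> y" using X[of t] t elim by auto
    qed auto
    also have "\<dots> = y * \<theta>" using si_const[of x "x + \<theta>" y] th by simp
    finally have "Bav \<theta> h x \<le> y" using th by (simp add: Bav_def divide_le_eq mult.commute)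
    then show ?case using e by simp
  qed
qed




lemma reduce:
  assumes f: "f \<in> Linf"
  obtains g C where "g \<in> borel_measurable borel" "\<And>t. \<bar>g t\<bar> \<le> C"
    "AE t in lebesgue. indicator {0..} t *\<^sub>R f t = g t"
proof -
  define F where "F t = indicator {0..} t *\<^sub>R f t" for t :: real
  from f obtain C0 where Fm: "F \<in> borel_measurable lebesgue"
    and bnd: "AE x in lebesgue. x \<in> {0..} \<longrightarrow> \<bar>f x\<bar> \<le> C0"
    unfolding Linf_def set_borel_measurable_def F_def by auto
  obtain g0 where g0m: "g0 \<in> borel_measurable lborel" and g0: "AE x in lborel. F x = g0 x"
    using completion_ex_borel_measurable_real[of F lborel] Fm by auto
  define C where "C = max C0 0"
  define g where "g x = (if \<bar>g0 x\<bar> \<le> C then g0 x else 0)" for x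
  have gm: "g \<in> borel_measurable borel"
    using g0m unfolding g_def measurable_lborel1 by measurable
  have gb: "\<bar>g t\<bar> \<le> C" for t by (simp add: g_def C_def)
  have bnd': "AE x in lborel. x \<in> {0..} \<longrightarrow> \<bar>f x\<bar> \<le> C0"
    using bnd by (simp add: AE_completion_iff)
  have "AE x in lborel. F x = g x"
    using g0 bnd'
  proof eventually_elim
    case (elim x)
    show ?case
    proof (cases "0 \<le> x")
      case True then show ?thesis using elim by (auto simp: g_def F_def C_def)
    next
      case False then show ?thesis using elim by (auto simp: g_def F_def C_def)
    qed
  qed
  then have "AE x in lebesgue. F x = g x" by (simp add: AE_completion_iff)
  then show ?thesis using that[OF gm gb] by (simp add: F_def)
qed

lemma conv_int:
  assumes f: "f \<in> Linf" and gm: "g \<in> borel_measurable borel"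
    and ae: "AE t in lebesgue. indicator {0..} t *\<^sub>R f t = g t"
    and A: "A \<subseteq> {0..}" "A \<in> sets borel" and km: "k \<in> borel_measurable borel"
  shows "(LINT t:A|lebesgue. f t * k t) = (LINT t:A|lborel. g t * k t)"
proof -
  define F where "F t = indicator {0..} t *\<^sub>R f t" for t :: real
  have Fm: "F \<in> borel_measurable lebesgue"
    using f unfolding Linf_def set_borel_measurable_def F_def by auto
  have gl: "g \<in> borel_measurable lebesgue" using gm
    by (intro measurable_completion) (simp add: measurable_lborel1)
  have kl: "k \<in> borel_measurable lebesgue" using km
    by (intro measurable_completion) (simp add: measurable_lborel1)
  have Al: "A \<in> sets lebesgue" using A(2) by (simp add: sets_completionI_sets)
  have il: "indicator A \<in> borel_measurable lebesgue" using Al by (rule borel_measurable_indicator)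
  have "(LINT t:A|lebesgue. f t * k t) = integral\<^sup>L lebesgue (\<lambda>t. indicator A t * (F t * k t))"
    unfolding set_lebesgue_integral_def
    by (rule Bochner_Integration.integral_cong[OF refl]) (use A in \<open>auto simp: F_def indicator_def\<close>)
  also have "\<dots> = integral\<^sup>L lebesgue (\<lambda>t. indicator A t * (g t * k t))"
  proof (rule integral_cong_AE)
    show "(\<lambda>t. indicator A t * (F t * k t)) \<in> borel_measurable lebesgue"
      using il Fm kl by measurable
    show "(\<lambda>t. indicator A t * (g t * k t)) \<in> borel_measurable lebesgue"
      using il gl kl by measurable
    show "AE t in lebesgue. indicator A t * (F t * k t) = indicator A t * (g t * k t)"
      using ae by eventually_elim (simp add: F_def)
  qed
  also have "\<dots> = integral\<^sup>L lborel (\<lambda>t. indicator A t * (g t * k t))"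
  proof (rule integral_completion)
    have "indicator A \<in> borel_measurable lborel" using A(2) by simp
    then show "(\<lambda>t. indicator A t * (g t * k t)) \<in> borel_measurable lborel"
      using gm km unfolding measurable_lborel1 by measurable
  qed
  also have "\<dots> = (LINT t:A|lborel. g t * k t)" by (simp add: set_lebesgue_integral_def)
  finally show ?thesis .
qed



lemma UP1:
  assumes gm[measurable]: "g \<in> borel_measurable borel" and gb: "\<And>t. \<bar>g t\<bar> \<le> C" and th: "0 < \<theta>"
  shows "Limsup at_top (\<lambda>x. ereal (Bav \<theta> ((S ^^ m) g) x)) \<le> Limsup at_top (\<lambda>x. ereal (Bav \<theta> g x))"
proof (induction m)
  case 0 then show ?case by simp
next
  case (Suc m)
  let ?h = "(S ^^ m) g"
  have hm[measurable]: "?h \<in> borel_measurable borel" and hb: "\<And>t. \<bar>?h t\<bar> \<le> C"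
    using iter_props[OF gm gb, of m] by auto
  have C0: "0 \<le> C" using gb[of 0] by auto
  have "Limsup at_top (\<lambda>x. ereal (Bav \<theta> (S ?h) x)) \<le> Limsup at_top (\<lambda>x. ereal (S (Bav \<theta> ?h) x))"
  proof (rule LS_err)
    fix e :: real assume e: "0 < e"
    have "eventually (\<lambda>x. C * exp (0 - x) < e) at_top" by (rule eventually_exp_small[OF C0 e])
    moreover have "eventually (\<lambda>x::real. 0 \<le> x) at_top" by (rule eventually_ge_at_top)
    ultimately show "eventually (\<lambda>x. Bav \<theta> (S ?h) x \<le> S (Bav \<theta> ?h) x + e) at_top"
    proof eventually_elim
      case (elim x)
      then show ?case using Bav_S_comm[OF hm hb elim(2) th] by simp
    qed
  qed
  also have "\<dots> \<le> Limsup at_top (\<lambda>x. ereal (Bav \<theta> ?h x))"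
    by (rule LS_S[OF Bav_meas[OF hm] Bav_bound[OF hm hb th]])
  also have "\<dots> \<le> Limsup at_top (\<lambda>x. ereal (Bav \<theta> g x))" by (rule Suc.IH)
  finally show ?case by simp
qed

lemma UP2:
  assumes gm[measurable]: "g \<in> borel_measurable borel" and gb: "\<And>t. \<bar>g t\<bar> \<le> C" and th: "0 < \<theta>"
  shows "Limsup at_top (\<lambda>x. ereal ((S ^^ Suc (Suc n)) g x)) \<le>
         Limsup at_top (\<lambda>x. ereal (Bav \<theta> g x)) + ereal (\<theta> * (2 * C * Kn (Suc (Suc n)) (Suc n)))"
proof -
  let ?u = "(S ^^ Suc (Suc n)) g"
  have "Limsup at_top (\<lambda>x. ereal (?u x)) \<le> Limsup at_top (\<lambda>x. ereal (Bav \<theta> ?u x)) + ereal (\<theta> * (2 * C * Kn (Suc (Suc n)) (Suc n)))"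
  proof (rule LS_shift)
    have "eventually (\<lambda>x::real. 0 \<le> x) at_top" by (rule eventually_ge_at_top)
    then show "eventually (\<lambda>x. ?u x \<le> Bav \<theta> ?u x + \<theta> * (2 * C * Kn (Suc (Suc n)) (Suc n))) at_top"
    proof eventually_elim
      case (elim x)
      then show ?case using iterS_Bav[OF gm gb elim th, of n] by linarith
    qed
  qed
  also have "\<dots> \<le> Limsup at_top (\<lambda>x. ereal (Bav \<theta> g x)) + ereal (\<theta> * (2 * C * Kn (Suc (Suc n)) (Suc n)))"
    by (rule add_right_mono[OF UP1[OF gm gb th]])
  finally show ?thesis .
qed

lemma LOW1:
  assumes gm[measurable]: "g \<in> borel_measurable borel" and gb: "\<And>t. \<bar>g t\<bar> \<le> C" and th: "0 < \<theta>"
  shows "Limsup at_top (\<lambda>x. ereal (Bav \<theta> g x)) \<le>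
         Limsup at_top (\<lambda>x. ereal (Bav \<theta> ((S ^^ m) g) x)) + ereal (real m * (2 * C / \<theta>))"
proof (induction m)
  case 0 then show ?case by simp
next
  case (Suc m)
  let ?h = "(S ^^ m) g"
  have hm[measurable]: "?h \<in> borel_measurable borel" and hb: "\<And>t. \<bar>?h t\<bar> \<le> C"
    using iter_props[OF gm gb, of m] by auto
  have step: "Limsup at_top (\<lambda>x. ereal (Bav \<theta> ?h x)) \<le> Limsup at_top (\<lambda>x. ereal (Bav \<theta> (S ?h) x)) + ereal (2 * C / \<theta>)"
  proof (rule LS_shift)
    have "eventually (\<lambda>x::real. 0 \<le> x) at_top" by (rule eventually_ge_at_top)
    then show "eventually (\<lambda>x. Bav \<theta> ?h x \<le> Bav \<theta> (S ?h) x + 2 * C / \<theta>) at_top"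
    proof eventually_elim
      case (elim x)
      then show ?case using Bav_S_diff[OF hm hb th elim] by linarith
    qed
  qed
  have "Limsup at_top (\<lambda>x. ereal (Bav \<theta> g x)) \<le> Limsup at_top (\<lambda>x. ereal (Bav \<theta> ?h x)) + ereal (real m * (2 * C / \<theta>))"
    by (rule Suc.IH)
  also have "\<dots> \<le> (Limsup at_top (\<lambda>x. ereal (Bav \<theta> (S ?h) x)) + ereal (2 * C / \<theta>)) + ereal (real m * (2 * C / \<theta>))"
    by (rule add_right_mono[OF step])
  also have "\<dots> = Limsup at_top (\<lambda>x. ereal (Bav \<theta> (S ?h) x)) + ereal (real (Suc m) * (2 * C / \<theta>))"
  proof -
    have r: "real (Suc m) * (2 * C / \<theta>) = 2 * C / \<theta> + real m * (2 * C / \<theta>)" by (simp add: algebra_simps add_divide_distrib)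
    show ?thesis unfolding r by (simp only: add.assoc plus_ereal.simps(1))
  qed
  finally show ?case by simp
qed

lemma LOW2:
  assumes gm[measurable]: "g \<in> borel_measurable borel" and gb: "\<And>t. \<bar>g t\<bar> \<le> C" and th: "0 < \<theta>"
  shows "Limsup at_top (\<lambda>x. ereal (Bav \<theta> g x)) \<le>
         Limsup at_top (\<lambda>x. ereal ((S ^^ m) g x)) + ereal (real m * (2 * C / \<theta>))"
proof -
  have hm[measurable]: "(S ^^ m) g \<in> borel_measurable borel" and hb: "\<And>t. \<bar>(S ^^ m) g t\<bar> \<le> C"
    using iter_props[OF gm gb, of m] by auto
  show ?thesis
    using LOW1[OF gm gb th, of m] add_right_mono[OF LS_B[OF hm hb th], of "ereal (real m * (2 * C / \<theta>))"]
    by (rule order_trans)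
qed

lemma conv_main:
  assumes gm[measurable]: "g \<in> borel_measurable borel" and gb: "\<And>t. \<bar>g t\<bar> \<le> C"
  defines "Es \<equiv> \<lambda>k. Limsup at_top (\<lambda>x. ereal ((S ^^ Suc k) g x))"
    and "Gf \<equiv> \<lambda>\<theta>. Limsup at_top (\<lambda>x. ereal (Bav \<theta> g x))"
  shows "Es \<longlonglongrightarrow> Limsup at_top Gf" "(Gf \<longlongrightarrow> Limsup at_top Gf) at_top"
proof -
  have C0: "0 \<le> C" using gb[of 0] by auto
  have step1: "Limsup at_top Gf \<le> Es k" for k
  proof (rule ereal_le_epsilon2)
    fix \<epsilon> :: real assume e: "0 < \<epsilon>"
    show "Limsup at_top Gf \<le> Es k + ereal \<epsilon>"
    proof (rule Limsup_bounded)
      have "eventually (\<lambda>\<theta>::real. max 1 (real (Suc k) * (2 * C) / \<epsilon>) \<le> \<theta>) at_top" by (rule eventually_ge_at_top)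
      then show "eventually (\<lambda>\<theta>. Gf \<theta> \<le> Es k + ereal \<epsilon>) at_top"
      proof eventually_elim
        case (elim \<theta>)
        have th: "0 < \<theta>" using elim by simp
        have "real (Suc k) * (2 * C) / \<epsilon> \<le> \<theta>" using elim by simp
        then have "real (Suc k) * (2 * C) \<le> \<theta> * \<epsilon>" using e by (simp add: pos_divide_le_eq)
        then have le: "real (Suc k) * (2 * C / \<theta>) \<le> \<epsilon>" using th by (simp add: pos_divide_le_eq mult.commute)
        have "Gf \<theta> \<le> Es k + ereal (real (Suc k) * (2 * C / \<theta>))"
          unfolding Gf_def Es_def by (rule LOW2[OF gm gb th])
        also have "\<dots> \<le> Es k + ereal \<epsilon>" using le by (intro add_left_mono) simp
        finally show ?case .
      qed
    qed
  qed
  have step2: "Limsup sequentially Es \<le> Gf \<theta>" if th: "0 < \<theta>" for \<theta>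
  proof (rule ereal_le_epsilon2)
    fix \<epsilon> :: real assume e: "0 < \<epsilon>"
    define M where "M = \<theta> * (2 * C) * exp 2 / \<epsilon>"
    define N where "N = nat \<lceil>M\<^sup>2\<rceil> + 4"
    show "Limsup sequentially Es \<le> Gf \<theta> + ereal \<epsilon>"
    proof (rule Limsup_bounded)
      show "eventually (\<lambda>k. Es k \<le> Gf \<theta> + ereal \<epsilon>) sequentially"
        unfolding eventually_sequentially
      proof (intro exI allI impI)
        fix k assume k: "N \<le> k"
        define n where "n = k - 1"
        have kn: "k = Suc n" using k by (simp add: n_def N_def)
        have k4: "4 \<le> real (Suc n)" using k kn by (simp add: N_def)
        have Mk: "M\<^sup>2 \<le> real (Suc n)"
        proof -
          have "M\<^sup>2 \<le> real (nat \<lceil>M\<^sup>2\<rceil>)" by linarith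
          also have "\<dots> \<le> real k" using k by (simp add: N_def)
          finally show ?thesis using kn by simp
        qed
        have sq: "M \<le> sqrt (real (Suc n))" using Mk by (rule real_le_rsqrt)
        have sq0: "0 < sqrt (real (Suc n))" by simp
        have Kn0: "0 \<le> Kn (Suc (Suc n)) (Suc n)" by (rule Kn_nonneg) simp
        have "\<theta> * (2 * C * Kn (Suc (Suc n)) (Suc n)) \<le> \<theta> * (2 * C * (exp 2 / sqrt (real (Suc n))))"
          using Kn_small[OF k4] th C0 by (intro mult_left_mono) auto
        also have "\<dots> = \<epsilon> * M / sqrt (real (Suc n))" using e by (simp add: M_def)
        also have "\<dots> \<le> \<epsilon>" using sq sq0 e by (simp add: divide_le_eq)
        finally have le: "\<theta> * (2 * C * Kn (Suc (Suc n)) (Suc n)) \<le> \<epsilon>" .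
        have "Es k \<le> Gf \<theta> + ereal (\<theta> * (2 * C * Kn (Suc (Suc n)) (Suc n)))"
          unfolding Es_def Gf_def kn by (rule UP2[OF gm gb th])
        also have "\<dots> \<le> Gf \<theta> + ereal \<epsilon>" using le by (intro add_left_mono) simp
        finally show "Es k \<le> Gf \<theta> + ereal \<epsilon>" .
      qed
    qed
  qed
  have a: "Limsup at_top Gf \<le> Liminf sequentially Es"
    by (rule Liminf_bounded) (use step1 in auto)
  have b: "Limsup sequentially Es \<le> Liminf at_top Gf"
  proof (rule Liminf_bounded)
    have "eventually (\<lambda>\<theta>::real. 1 \<le> \<theta>) at_top" by (rule eventually_ge_at_top)
    then show "eventually (\<lambda>\<theta>. Limsup sequentially Es \<le> Gf \<theta>) at_top"
      by eventually_elim (rule step2, simp)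
  qed
  have c1: "Liminf sequentially Es \<le> Limsup sequentially Es" by (rule Liminf_le_Limsup) simp
  have c2: "Liminf at_top Gf \<le> Limsup at_top Gf" by (rule Liminf_le_Limsup) simp
  have e1: "Liminf sequentially Es = Limsup at_top Gf" using a b c1 c2 by (metis order.trans order.antisym)
  have e2: "Limsup sequentially Es = Limsup at_top Gf" using a b c1 c2 by (metis order.trans order.antisym)
  have e3: "Liminf at_top Gf = Limsup at_top Gf" using a b c1 c2 by (metis order.trans order.antisym)
  show "Es \<longlonglongrightarrow> Limsup at_top Gf" by (rule Liminf_eq_Limsup) (use e1 e2 in auto)
  show "(Gf \<longlongrightarrow> Limsup at_top Gf) at_top" by (rule Liminf_eq_Limsup) (use e3 in auto)
qed



lemma Sop_borel:
  assumes hm[measurable]: "h \<in> borel_measurable borel"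
  shows "Sop h = S h"
proof
  fix x
  have m: "(\<lambda>t. indicator {0..x} t *\<^sub>R (h t * exp t)) \<in> borel_measurable lborel"
    using hm unfolding measurable_lborel1 by measurable
  show "Sop h x = S h x"
    unfolding Sop_def S_def set_lebesgue_integral_def using integral_completion[OF m] by simp
qed

lemma Sop_iter_borel:
  assumes hm[measurable]: "h \<in> borel_measurable borel"
  shows "(Sop ^^ k) h = (S ^^ k) h"
proof (induction k)
  case 0 then show ?case by simp
next
  case (Suc k)
  have "(S ^^ k) h \<in> borel_measurable borel"
  proof (induction k)
    case 0 then show ?case using hm by simp
  next
    case (Suc k) then show ?case by simp
  qed
  then show ?case using Suc.IH Sop_borel by simp
qed

lemma Linf_uminus: "f \<in> Linf \<Longrightarrow> (\<lambda>x. - f x) \<in> Linf"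
  unfolding Linf_def set_borel_measurable_def by auto

lemma main_eq:
  assumes f: "f \<in> Linf"
  shows "Ebar_inf f = Mbar1 f"
proof -
  obtain g C where gm[measurable]: "g \<in> borel_measurable borel" and gb: "\<And>t. \<bar>g t\<bar> \<le> C"
    and ae: "AE t in lebesgue. indicator {0..} t *\<^sub>R f t = g t"
    using reduce[OF f] by blast
  have Sf: "Sop f = S g"
  proof
    fix x
    have "(LINT t:{0..x}|lebesgue. f t * exp t) = (LINT t:{0..x}|lborel. g t * exp t)"
      by (rule conv_int[OF f gm ae]) auto
    then show "Sop f x = S g x" by (simp add: Sop_def S_def)
  qed
  have iter: "(Sop ^^ Suc k) f = (S ^^ Suc k) g" for k
  proof -
    have "(Sop ^^ Suc k) f = (Sop ^^ k) (Sop f)" by (simp del: funpow.simps add: funpow_Suc_right)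
    also have "\<dots> = (S ^^ k) (S g)" unfolding Sf by (rule Sop_iter_borel) simp
    also have "\<dots> = (S ^^ Suc k) g" by (simp del: funpow.simps add: funpow_Suc_right)
    finally show ?thesis .
  qed
  define Es where "Es = (\<lambda>k. Limsup at_top (\<lambda>x. ereal ((S ^^ Suc k) g x)))"
  define Gf where "Gf = (\<lambda>\<theta>. Limsup at_top (\<lambda>x. ereal (Bav \<theta> g x)))"
  have E: "(\<lambda>k. Ebar (Suc k) f) = Es" unfolding Es_def Ebar_def iter ..
  have M: "(\<lambda>\<theta>. Limsup at_top (\<lambda>x. ereal ((1 / \<theta>) * (LINT t:{x..x+\<theta>}|lebesgue. f t)))) = Gf"
  proof
    fix \<theta> :: real
    show "Limsup at_top (\<lambda>x. ereal ((1 / \<theta>) * (LINT t:{x..x+\<theta>}|lebesgue. f t))) = Gf \<theta>"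
      unfolding Gf_def
    proof (rule Limsup_eq)
      have "eventually (\<lambda>x::real. 0 \<le> x) at_top" by (rule eventually_ge_at_top)
      then show "eventually (\<lambda>x. ereal ((1 / \<theta>) * (LINT t:{x..x+\<theta>}|lebesgue. f t)) = ereal (Bav \<theta> g x)) at_top"
      proof eventually_elim
        case (elim x)
        have "(LINT t:{x..x+\<theta>}|lebesgue. f t * 1) = (LINT t:{x..x+\<theta>}|lborel. g t * 1)"
          by (rule conv_int[OF f gm ae]) (use elim in auto)
        then show ?case by (simp add: Bav_def)
      qed
    qed
  qed
  have t1: "Es \<longlonglongrightarrow> Limsup at_top Gf" unfolding Es_def Gf_def by (rule conv_main[OF gm gb])
  have t2: "(Gf \<longlongrightarrow> Limsup at_top Gf) at_top" unfolding Gf_def by (rule conv_main[OF gm gb])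
  have "Ebar_inf f = lim Es" unfolding Ebar_inf_def E ..
  also have "\<dots> = Limsup at_top Gf" using t1 by (rule limI)
  also have "\<dots> = Lim at_top Gf" using t2 by (intro tendsto_Lim[symmetric]) simp_all
  also have "\<dots> = Mbar1 f" unfolding Mbar1_def M ..
  finally show ?thesis .
qed

theorem theorem5p2:
  shows "(\<forall>f \<in> Linf. Ebar_inf f = Mbar1 f) \<and>
         sm_domain Ebar_inf = sm_domain Mbar1 \<and>
         (\<forall>f \<in> sm_domain Ebar_inf. Ebar_inf f = Mbar1 f)"
proof (intro conjI ballI)
  show "Ebar_inf f = Mbar1 f" if "f \<in> Linf" for f using main_eq[OF that] .
  show "sm_domain Ebar_inf = sm_domain Mbar1"
    unfolding sm_domain_def using main_eq Linf_uminus by auto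
  show "Ebar_inf f = Mbar1 f" if "f \<in> sm_domain Ebar_inf" for f
    using that main_eq by (auto simp: sm_domain_def)
qed


end
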